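(* For every planar rooted tree $t$, the antipode $S$ of $\mathcal{H}$ satisfies $S(t)=-\sum_{c}(-1)^{n_c}W^c(t)$, where the sum runs over all left cuts $c$ of $t$ (including the empty cut).
   Context: Planar rooted trees have their children linearly ordered left to right; a planar forest is a finite, possibly empty, sequence of planar rooted trees; $\mathcal{H}$ is the free associative unital algebra over a field $K$ on planar rooted trees, with basis the planar forests and product concatenation. $B^+(F)$ is the tree obtained by grafting the trees of $F$ on a new common root; $\varepsilon(F)=\delta_{F,1}$. $\Delta$ is the unique linear map with $\Delta(1)=1\otimes1$, $\Delta(xy)=(x\otimes1)\Delta(y)+\Delta(x)(1\otimes y)-x\otimes y$, $\Delta(B^+(x))=B^+(x)\otimes 1+(\mathrm{Id}\otimes B^+)\Delta(x)$; with it $\mathcal{H}$ is a graded infinitesimal bialgebra, and its antipode $S$ is the inverse of $\mathrm{Id}$ for the convolution product $f\star g=m\circ(f\otimes g)\circ\Delta$ on linear endomorphisms (unit $1\varepsilon$). Orders on vertices: $s\geq_{high}s'$ iff $s'=s$ or $s'$ is an ancestor of $s$; for $\geq_{high}$-incomparable $s,s'$ in a forest $t_1\cdots t_n$, $s\geq_{left}s'$ iff $s\in t_i,s'\in t_j$ with $i<j$, or both lie in $t_i$ and $s\geq_{left}s'$ in the forest obtained from $t_i$ by deleting its root (recursively); $s\geq_{h,l}s'$ iff $s\geq_{high}s'$ or $s\geq_{left}s'$ (a total order). For a tree $t$, let $s$ be its greatest vertex for $\geq_{h,l}$ (its leftmost leaf). A left edge is an edge on the path from the root to $s$. A left cut $c$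 is a (possibly empty) set of left edges; cutting them splits $t$ into trees $t_1,\dots,t_n$ indexed so that their roots satisfy $r_1\geq_{h,l}\cdots\geq_{h,l}r_n$ in $t$; $W^c(t)=t_1\cdots t_n$, and $n_c$ is the number of edges in $c$. *)

theory Defs
  imports Main "HOL-Library.Poly_Mapping" "HOL-Library.Sublist"
begin

text \<open>A planar rooted tree is a root together with the (left-to-right ordered) list of
  its subtrees; a planar forest is a finite list of planar rooted trees.\<close>
datatype ptree = Node "ptree list"

type_synonym forest = "ptree list"

definition Bplus :: "forest \<Rightarrow> ptree" where
  "Bplus F = Node F"

text \<open>Elements of H: finite K-linear combinations of planar forests (the basis);
  elements of H (x) H: finite linear combinations of pairs of forests (basis F (x) G).\<close>
type_synonym 'k H = "forest \<Rightarrow>\<^sub>0 'k"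
type_synonym 'k HH = "(forest \<times> forest) \<Rightarrow>\<^sub>0 'k"

definition lext :: "('a \<Rightarrow> ('b \<Rightarrow>\<^sub>0 'k::field)) \<Rightarrow> ('a \<Rightarrow>\<^sub>0 'k) \<Rightarrow> ('b \<Rightarrow>\<^sub>0 'k)" where
  "lext f p = (\<Sum>a\<in>Poly_Mapping.keys p. Poly_Mapping.map (\<lambda>x. Poly_Mapping.lookup p a * x) (f a))"

text \<open>Basis element of H given by a forest, and the unit 1 (the empty forest).\<close>
definition bas :: "forest \<Rightarrow> 'k::field H" where
  "bas F = Poly_Mapping.single F 1"

definition bas2 :: "forest \<Rightarrow> forest \<Rightarrow> 'k::field HH" where
  "bas2 F G = Poly_Mapping.single (F, G) 1"

definition hmul :: "'k::field H \<Rightarrow> 'k H \<Rightarrow> 'k H" where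
  "hmul x y = lext (\<lambda>F. lext (\<lambda>G. bas (F @ G)) y) x"

text \<open>Delta on basis elements, following the defining recursion:
  Delta(1) = 1 (x) 1,
  Delta(x y) = (x (x) 1) Delta(y) + Delta(x) (1 (x) y) - x (x) y  (used with x a tree),
  Delta(B+(x)) = B+(x) (x) 1 + (Id (x) B+) Delta(x).\<close>
fun deltaF :: "forest \<Rightarrow> 'k::field HH" and deltaT :: "ptree \<Rightarrow> 'k::field HH" where
  "deltaF [] = bas2 [] []"
| "deltaF (t # F) =
     lext (\<lambda>(a, b). bas2 (t # a) b) (deltaF F)
   + lext (\<lambda>(a, b). bas2 a (b @ F)) (deltaT t)
   - bas2 [t] F"
| "deltaT (Node F) = bas2 [Node F] [] + lext (\<lambda>(a, b). bas2 a [Bplus b]) (deltaF F)"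

definition Delta :: "'k::field H \<Rightarrow> 'k HH" where
  "Delta x = lext deltaF x"

text \<open>A linear endomorphism of H is determined by (and identified with) its values on the
  basis of forests.\<close>
type_synonym 'k endo = "forest \<Rightarrow> 'k H"

definition conv :: "'k::field endo \<Rightarrow> 'k endo \<Rightarrow> 'k endo" where
  "conv f g F = lext (\<lambda>(a, b). hmul (f a) (g b)) (deltaF F)"

definition idH :: "'k::field endo" where
  "idH F = bas F"

definition unitE :: "'k::field endo" where
  "unitE F = (if F = [] then bas [] else 0)"

definition antipode :: "'k::field endo" where
  "antipode = (THE S. conv S idH = unitE \<and> conv idH S = unitE)"

text \<open>Vertices of a tree are addressed by positions: the root is [], and the i-th child
  (0-based, left to right) of the vertex at p is at p @ [i].\<close>
lemma size_nth_less: "i < length ts \<Longrightarrow> size (ts ! i) < Suc (size_list size ts)"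
  by (metis le_imp_less_Suc nth_mem size_list_estimation' order_refl)

lemma size_zip_less: "(a, b) \<in> set (zip xs ts) \<Longrightarrow> size b < Suc (size_list size ts)"
  by (metis le_imp_less_Suc set_zip_rightD size_list_estimation' order_refl)

function positions :: "ptree \<Rightarrow> nat list set" where
  "positions (Node ts) = insert [] (\<Union>i<length ts. (\<lambda>p. i # p) ` positions (ts ! i))"
  by pat_completeness auto
termination
  by (relation "measure size") (auto intro: size_nth_less)

fun subtree :: "ptree \<Rightarrow> nat list \<Rightarrow> ptree" where
  "subtree t [] = t"
| "subtree (Node ts) (i # p) = subtree (ts ! i) p"

text \<open>s >=_high s' iff s' = s or s' is an ancestor of s.\<close>
definition geq_high :: "nat list \<Rightarrow> nat list \<Rightarrow> bool" where
  "geq_high s s' \<longleftrightarrow> prefix s' s"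

text \<open>For high-incomparable s, s': s >=_left s' iff, below their deepest common ancestor,
  s lies in a subtree to the left of the subtree containing s' (this is the recursive
  definition of the paper unfolded).\<close>
definition geq_left :: "nat list \<Rightarrow> nat list \<Rightarrow> bool" where
  "geq_left s s' \<longleftrightarrow> \<not> prefix s s' \<and> \<not> prefix s' s \<and>
     (\<exists>u i j p q. s = u @ i # p \<and> s' = u @ j # q \<and> i < j)"

definition geq_hl :: "nat list \<Rightarrow> nat list \<Rightarrow> bool" where
  "geq_hl s s' \<longleftrightarrow> geq_high s s' \<or> geq_left s s'"

text \<open>The greatest vertex of t for >=_{h,l} (its leftmost leaf).\<close>
definition greatest_vertex :: "ptree \<Rightarrow> nat list" where
  "greatest_vertex t = (THE s. s \<in> positions t \<and> (\<forall>s'\<in>positions t. geq_hl s s'))"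

text \<open>An edge is identified with its lower endpoint (a non-root vertex).  Left edges are the
  edges on the path from the root to the greatest vertex.\<close>
definition left_edges :: "ptree \<Rightarrow> nat list set" where
  "left_edges t = {v. v \<noteq> [] \<and> prefix v (greatest_vertex t)}"

definition left_cuts :: "ptree \<Rightarrow> nat list set set" where
  "left_cuts t = Pow (left_edges t)"

text \<open>prune P p t: delete from t (whose root sits at position p in the ambient tree) every
  subtree whose root position satisfies P.\<close>
function prune :: "(nat list \<Rightarrow> bool) \<Rightarrow> nat list \<Rightarrow> ptree \<Rightarrow> ptree" where
  "prune P p (Node ts) =
     Node (map (\<lambda>(i, s). prune P (p @ [i]) s)
               (filter (\<lambda>(i, s). \<not> P (p @ [i])) (zip [0..<length ts] ts)))"
  by pat_completeness auto
termination
  by (relation "measure (\<lambda>(P, p, t). size t)") (auto intro: size_zip_less)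

text \<open>The tree of the cut forest whose root is the vertex r (r is [] or r \<in> c).\<close>
definition cut_piece :: "ptree \<Rightarrow> nat list set \<Rightarrow> nat list \<Rightarrow> ptree" where
  "cut_piece t c r = prune (\<lambda>w. w \<in> c) r (subtree t r)"

definition cut_roots :: "ptree \<Rightarrow> nat list set \<Rightarrow> nat list list" where
  "cut_roots t c = (THE rs. distinct rs \<and> set rs = insert [] c \<and> sorted_wrt geq_hl rs)"

definition Wc :: "ptree \<Rightarrow> nat list set \<Rightarrow> forest" where
  "Wc t c = map (cut_piece t c) (cut_roots t c)"

end

theory Submission
  imports Defs
begin


lemma lookup_lext:
  "Poly_Mapping.lookup (lext f p) b = (\<Sum>a\<in>Poly_Mapping.keys p. Poly_Mapping.lookup p a * Poly_Mapping.lookup (f a) b)"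
  unfolding lext_def by (simp add: lookup_sum map.rep_eq when_def cong: if_cong) (rule sum.cong, auto)

lemma lookup_lext_sup:
  assumes "finite A" "Poly_Mapping.keys p \<subseteq> A"
  shows "Poly_Mapping.lookup (lext f p) b = (\<Sum>a\<in>A. Poly_Mapping.lookup p a * Poly_Mapping.lookup (f a) b)"
  unfolding lookup_lext
  by (rule sum.mono_neutral_left) (use assms in \<open>auto simp: in_keys_iff\<close>)

lemma lext_add: "lext f (p + q) = lext f p + lext f q"
proof (rule poly_mapping_eqI)
  fix b
  let ?A = "Poly_Mapping.keys p \<union> Poly_Mapping.keys q"
  have "Poly_Mapping.keys (p+q) \<subseteq> ?A" by (simp add: keys_add)
  then show "Poly_Mapping.lookup (lext f (p + q)) b = Poly_Mapping.lookup (lext f p + lext f q) b"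
    by (simp add: lookup_add lookup_lext_sup[of ?A] distrib_right sum.distrib)
qed

lemma lext_zero[simp]: "lext f 0 = 0"
  by (simp add: lext_def)

lemma lext_uminus: "lext f (- p) = - lext f p"
  by (rule poly_mapping_eqI) (simp add: lookup_lext lookup_uminus sum_negf keys_def)

lemma lext_diff: "lext f (p - q) = lext f p - lext f q"
  by (metis diff_conv_add_uminus lext_add lext_uminus)

lemma lext_sum: "lext f (\<Sum>i\<in>I. g i) = (\<Sum>i\<in>I. lext f (g i))"
  by (induction I rule: infinite_finite_induct) (auto simp: lext_add)

lemma lext_single: "lext f (Poly_Mapping.single a c) = Poly_Mapping.map (\<lambda>x. c * x) (f a)"
  by (rule poly_mapping_eqI) (auto simp: lookup_lext map.rep_eq when_def)

lemma lext_bas[simp]: "lext f (bas a) = f a"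
  by (rule poly_mapping_eqI) (auto simp: bas_def lookup_lext map.rep_eq when_def)

lemma lext_bas2[simp]: "lext f (bas2 a b) = f (a, b)"
  by (rule poly_mapping_eqI) (auto simp: bas2_def lookup_lext map.rep_eq when_def)

lemma lext_fadd: "lext (\<lambda>a. f a + g a) p = lext f p + lext g p"
  by (rule poly_mapping_eqI) (simp add: lookup_lext lookup_add distrib_left sum.distrib)

lemma lext_fsum: "lext (\<lambda>a. \<Sum>i\<in>I. g i a) p = (\<Sum>i\<in>I. lext (g i) p)"
  by (rule poly_mapping_eqI) (simp add: lookup_lext lookup_sum sum_distrib_left sum.swap[of _ I])

lemma lext_fzero[simp]: "lext (\<lambda>a. 0) p = 0"
  by (rule poly_mapping_eqI) (simp add: lookup_lext)

lemma lext_funiminus: "lext (\<lambda>a. - g a) p = - lext g p"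
  by (rule poly_mapping_eqI) (simp add: lookup_lext sum_negf)

lemma lext_cong: "(\<And>a. a \<in> Poly_Mapping.keys p \<Longrightarrow> f a = g a) \<Longrightarrow> lext f p = lext g p"
  unfolding lext_def by (rule sum.cong) auto

lemma lext_bas_id[simp]: "lext bas p = p"
proof (rule poly_mapping_eqI)
  fix k
  have "Poly_Mapping.lookup (lext bas p) k = (\<Sum>a\<in>Poly_Mapping.keys p. if a = k then Poly_Mapping.lookup p a else 0)"
    unfolding lookup_lext by (rule sum.cong) (auto simp: bas_def lookup_single when_def)
  also have "\<dots> = Poly_Mapping.lookup p k"
    by (simp add: sum.delta' in_keys_iff)
  finally show "Poly_Mapping.lookup (lext bas p) k = Poly_Mapping.lookup p k" .
qed

lemma keys_map_sub: "Poly_Mapping.keys (Poly_Mapping.map g p) \<subseteq> Poly_Mapping.keys p"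
  by (auto simp: in_keys_iff map.rep_eq when_def)

lemma lext_lext: "lext f (lext g p) = lext (\<lambda>a. lext f (g a)) p"
proof (rule poly_mapping_eqI)
  fix b
  let ?A = "\<Union>a\<in>Poly_Mapping.keys p. Poly_Mapping.keys (g a)"
  have fin: "finite ?A" by simp
  have k: "Poly_Mapping.keys (lext g p) \<subseteq> ?A"
    by (force simp: in_keys_iff lookup_lext elim!: sum.not_neutral_contains_not_neutral)
  have "Poly_Mapping.lookup (lext f (lext g p)) b = (\<Sum>c\<in>?A. Poly_Mapping.lookup (lext g p) c * Poly_Mapping.lookup (f c) b)"
    by (rule lookup_lext_sup[OF fin k])
  also have "\<dots> = (\<Sum>c\<in>?A. \<Sum>a\<in>Poly_Mapping.keys p. Poly_Mapping.lookup p a * Poly_Mapping.lookup (g a) c * Poly_Mapping.lookup (f c) b)"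
    by (simp add: lookup_lext sum_distrib_right)
  also have "\<dots> = (\<Sum>a\<in>Poly_Mapping.keys p. \<Sum>c\<in>?A. Poly_Mapping.lookup p a * Poly_Mapping.lookup (g a) c * Poly_Mapping.lookup (f c) b)"
    by (rule sum.swap)
  also have "\<dots> = (\<Sum>a\<in>Poly_Mapping.keys p. Poly_Mapping.lookup p a * Poly_Mapping.lookup (lext f (g a)) b)"
  proof (rule sum.cong[OF refl])
    fix a assume a: "a \<in> Poly_Mapping.keys p"
    have "Poly_Mapping.keys (g a) \<subseteq> ?A" using a by auto
    then show "(\<Sum>c\<in>?A. Poly_Mapping.lookup p a * Poly_Mapping.lookup (g a) c * Poly_Mapping.lookup (f c) b) = Poly_Mapping.lookup p a * Poly_Mapping.lookup (lext f (g a)) b"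
      by (simp add: lookup_lext_sup[OF fin] sum_distrib_left mult.assoc)
  qed
  finally show "Poly_Mapping.lookup (lext f (lext g p)) b = Poly_Mapping.lookup (lext (\<lambda>a. lext f (g a)) p) b"
    by (simp add: lookup_lext)
qed



lemma hmul_bas_bas[simp]: "hmul (bas F) (bas G) = bas (F @ G)"
  by (simp add: hmul_def)

lemma hmul_assoc: "hmul (hmul x y) z = hmul x (hmul y z)"
  by (simp add: hmul_def lext_lext)

lemma hmul_add_left: "hmul (x + y) z = hmul x z + hmul y z"
  by (simp add: hmul_def lext_add)
lemma hmul_add_right: "hmul x (y + z) = hmul x y + hmul x z"
  by (simp add: hmul_def lext_add lext_fadd)
lemma hmul_sum_left: "hmul (\<Sum>i\<in>I. g i) z = (\<Sum>i\<in>I. hmul (g i) z)"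
  by (simp add: hmul_def lext_sum)
lemma hmul_sum_right: "hmul x (\<Sum>i\<in>I. g i) = (\<Sum>i\<in>I. hmul x (g i))"
  by (simp add: hmul_def lext_sum lext_fsum)
lemma hmul_zero_left[simp]: "hmul 0 z = 0"
  by (simp add: hmul_def)
lemma hmul_zero_right[simp]: "hmul x 0 = 0"
  by (simp add: hmul_def)
lemma hmul_uminus_left: "hmul (- x) z = - hmul x z"
  by (simp add: hmul_def lext_uminus)
lemma hmul_uminus_right: "hmul x (- z) = - hmul x z"
  by (simp add: hmul_def lext_uminus lext_funiminus)
lemma hmul_diff_left: "hmul (x - y) z = hmul x z - hmul y z"
  by (simp add: hmul_def lext_diff)
lemma hmul_one_right[simp]: "hmul x (bas []) = x"
  by (simp add: hmul_def)
lemma hmul_one_left[simp]: "hmul (bas []) y = y"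
  by (simp add: hmul_def)

fun nvf :: "forest \<Rightarrow> nat" and nvt :: "ptree \<Rightarrow> nat" where
  "nvf [] = 0"
| "nvf (t # F) = nvt t + nvf F"
| "nvt (Node F) = Suc (nvf F)"

lemma nvt_pos: "nvt t > 0"
  by (cases t) auto

lemma nvf_append[simp]: "nvf (F @ G) = nvf F + nvf G"
  by (induction F) auto

lemma nvf_eq_0[simp]: "nvf F = 0 \<longleftrightarrow> F = []"
  by (cases F) (auto simp: nvt_pos)

fun splitF :: "nat \<Rightarrow> forest \<Rightarrow> forest \<times> forest" and splitT :: "nat \<Rightarrow> ptree \<Rightarrow> forest \<times> forest" where
  "splitF k [] = ([], [])"
| "splitF k (t # F) = (if k \<le> nvt t then (fst (splitT k t), snd (splitT k t) @ F)
                       else (t # fst (splitF (k - nvt t) F), snd (splitF (k - nvt t) F)))"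
| "splitT k (Node H) = (if k \<le> nvf H then (fst (splitF k H), [Node (snd (splitF k H))]) else ([Node H], []))"

definition tpk :: "nat \<Rightarrow> forest \<Rightarrow> forest" where "tpk k F = fst (splitF k F)"
definition rest :: "nat \<Rightarrow> forest \<Rightarrow> forest" where "rest k F = snd (splitF k F)"

lemma split_0': "k = 0 \<Longrightarrow> splitF k F = ([], F)" "k = 0 \<Longrightarrow> splitT k t = ([], [t])"
  by (induction k F and k t rule: splitF_splitT.induct) auto

lemma split_0: "splitF 0 F = ([], F)" "splitT 0 t = ([], [t])"
  using split_0' by auto

lemma splitT_full: "nvt t \<le> k \<Longrightarrow> splitT k t = ([t], [])"
  by (cases t) auto

lemma splitF_single: "splitF k [t] = (if k \<le> nvt t then splitT k t else ([t], []))"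
  by (cases t) (auto simp: split_0)

lemma splitF_append_le:
  "k \<le> nvf X \<Longrightarrow> splitF k (X @ G) = (tpk k X, rest k X @ G)"
  by (induction X arbitrary: k) (auto simp: tpk_def rest_def split_0)

lemma splitF_append_ge:
  "nvf X \<le> k \<Longrightarrow> splitF k (X @ G) = (X @ tpk (k - nvf X) G, rest (k - nvf X) G)"
proof (induction X arbitrary: k)
  case Nil then show ?case by (simp add: tpk_def rest_def)
next
  case (Cons t X)
  show ?case
  proof (cases "k \<le> nvt t")
    case True
    have "nvt t + nvf X \<le> k" using Cons.prems by simp
    then have "nvf X = 0" "k = nvt t" using True by linarith+
    then have "X = []" "k = nvt t" by auto
    then show ?thesis by (simp add: splitT_full tpk_def rest_def split_0)
  next
    case False
    then show ?thesis using Cons by (simp add: tpk_def rest_def)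
  qed
qed

lemma tpk_single_tree: "k \<le> nvf H \<Longrightarrow> tpk k [Node H] = tpk k H"
  "k \<le> nvf H \<Longrightarrow> rest k [Node H] = [Node (rest k H)]"
  "nvf H < k \<Longrightarrow> tpk k [Node H] = [Node H]"
  "nvf H < k \<Longrightarrow> rest k [Node H] = []"
  by (auto simp: tpk_def rest_def)

lemma nv_split: "k \<le> nvf F \<Longrightarrow> nvf (tpk k F) = k \<and> nvf (rest k F) = nvf F - k"
  "k \<le> nvt t \<Longrightarrow> nvf (fst (splitT k t)) = k \<and> nvf (snd (splitT k t)) = nvt t - k"
  by (induction k F and k t rule: splitF_splitT.induct)
     (auto simp: tpk_def rest_def split: if_splits)

lemma nvf_top: "k \<le> nvf F \<Longrightarrow> nvf (tpk k F) = k"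
  and nvf_rest: "k \<le> nvf F \<Longrightarrow> nvf (rest k F) = nvf F - k"
  using nv_split(1) by auto

lemma tpk_0[simp]: "tpk 0 F = []" and rest_0[simp]: "rest 0 F = F"
  by (auto simp: tpk_def rest_def split_0)

lemma tpk_full: "nvf F \<le> k \<Longrightarrow> tpk k F = F" and rest_full: "nvf F \<le> k \<Longrightarrow> rest k F = []"
  using splitF_append_ge[of "F" k "[]"] by (auto simp: tpk_def rest_def)



lemma delta_explicit:
  "(deltaF F :: 'k::field HH) = (\<Sum>k\<in>{0..nvf F}. bas2 (tpk k F) (rest k F))"
  "(deltaT t :: 'k HH) = (\<Sum>k\<in>{0..nvt t}. bas2 (fst (splitT k t)) (snd (splitT k t)))"
proof (induction F and t rule: deltaF_deltaT.induct)
  case 1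
  then show ?case by (simp add: tpk_def rest_def)
next
  case (2 t F)
  let ?nt = "nvt t" and ?nF = "nvf F"
  have L1: "lext (\<lambda>(a, b). bas2 (t # a) b) (deltaF F) = (\<Sum>k\<in>{0..?nF}. bas2 (t # tpk k F) (rest k F) :: 'k HH)"
    unfolding 2 by (simp add: lext_sum)
  have L2: "lext (\<lambda>(a, b). bas2 a (b @ F)) (deltaT t) = (\<Sum>k\<in>{0..?nt}. bas2 (fst (splitT k t)) (snd (splitT k t) @ F) :: 'k HH)"
    unfolding 2 by (simp add: lext_sum case_prod_beta)
  have S1: "(\<Sum>k\<in>{0..?nF}. bas2 (t # tpk k F) (rest k F)) = bas2 [t] F + (\<Sum>k\<in>{1..?nF}. bas2 (t # tpk k F) (rest k F))"
    by (subst sum.atLeast_Suc_atMost) auto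
  have T: "(\<Sum>k\<in>{0..?nt + ?nF}. bas2 (tpk k (t # F)) (rest k (t # F)))
        = (\<Sum>k\<in>{0..?nt}. bas2 (tpk k (t # F)) (rest k (t # F))) + (\<Sum>k\<in>{?nt + 1..?nt + ?nF}. bas2 (tpk k (t # F)) (rest k (t # F)))"
    by (rule sum.ub_add_nat) simp
  have T1: "(\<Sum>k\<in>{0..?nt}. bas2 (tpk k (t # F)) (rest k (t # F))) = (\<Sum>k\<in>{0..?nt}. bas2 (fst (splitT k t)) (snd (splitT k t) @ F))"
    by (rule sum.cong) (auto simp: tpk_def rest_def)
  have T2: "(\<Sum>k\<in>{?nt + 1..?nt + ?nF}. bas2 (tpk k (t # F)) (rest k (t # F))) = (\<Sum>k\<in>{1..?nF}. bas2 (t # tpk k F) (rest k F))"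
  proof -
    have "(\<Sum>k\<in>{?nt + 1..?nt + ?nF}. bas2 (tpk k (t # F)) (rest k (t # F)))
        = (\<Sum>k\<in>{1 + ?nt..?nF + ?nt}. bas2 (tpk k (t # F)) (rest k (t # F)))"
      by (simp add: add.commute)
    also have "\<dots> = (\<Sum>k\<in>{1..?nF}. bas2 (tpk (k + ?nt) (t # F)) (rest (k + ?nt) (t # F)))"
      by (rule sum.shift_bounds_cl_nat_ivl)
    also have "\<dots> = (\<Sum>k\<in>{1..?nF}. bas2 (t # tpk k F) (rest k F))"
      by (rule sum.cong) (auto simp: tpk_def rest_def)
    finally show ?thesis .
  qed
  have last: "bas2 (fst (splitT ?nt t)) (snd (splitT ?nt t) @ F) = bas2 [t] F"
    by (simp add: splitT_full)
  have S2: "(\<Sum>k\<in>{0..?nt}. bas2 (fst (splitT k t)) (snd (splitT k t) @ F))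
      = (\<Sum>k\<in>{0..<?nt}. bas2 (fst (splitT k t)) (snd (splitT k t) @ F)) + bas2 [t] F"
  proof -
    obtain m where m: "?nt = Suc m" using nvt_pos not0_implies_Suc by blast
    have e: "{0..<?nt} = {0..m}" using m by auto
    show ?thesis using last unfolding m by (simp add: atLeastLessThanSuc_atLeastAtMost)
  qed
  show ?case
    apply (simp only: deltaF.simps L1 L2 S1 T T1 T2 S2 nvf.simps)
    apply (simp add: algebra_simps)
    done
next
  case (3 F)
  have "(deltaT (Node F) :: 'k HH) = bas2 [Node F] [] + (\<Sum>k\<in>{0..nvf F}. bas2 (tpk k F) [Node (rest k F)])"
    by (simp add: 3 lext_sum Bplus_def)
  also have "\<dots> = (\<Sum>k\<in>{0..nvt (Node F)}. bas2 (fst (splitT k (Node F))) (snd (splitT k (Node F))))"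
    by (simp add: add.commute tpk_def rest_def)
  finally show ?case .
qed

lemma conv_explicit:
  "conv f g F = (\<Sum>k\<in>{0..nvf F}. hmul (f (tpk k F)) (g (rest k F)))"
  by (simp add: conv_def delta_explicit lext_sum)



lemma tpk_app_le: "k \<le> nvf X \<Longrightarrow> tpk k (X @ G) = tpk k X"
  and rest_app_le: "k \<le> nvf X \<Longrightarrow> rest k (X @ G) = rest k X @ G"
  using splitF_append_le[of k X G] by (auto simp: tpk_def rest_def)

lemma tpk_app_ge: "nvf X \<le> k \<Longrightarrow> tpk k (X @ G) = X @ tpk (k - nvf X) G"
  and rest_app_ge: "nvf X \<le> k \<Longrightarrow> rest k (X @ G) = rest (k - nvf X) G"
  using splitF_append_ge[of X k G] by (auto simp: tpk_def rest_def)

definition P3 :: "forest \<Rightarrow> bool" where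
  "P3 F \<longleftrightarrow> (\<forall>j k. j \<le> k \<longrightarrow> k \<le> nvf F \<longrightarrow>
     tpk j (tpk k F) = tpk j F \<and> rest j (tpk k F) = tpk (k - j) (rest j F) \<and> rest (k - j) (rest j F) = rest k F)"

lemma P3_full:
  assumes "j \<le> nvf F"
  shows "tpk j (tpk (nvf F) F) = tpk j F \<and> rest j (tpk (nvf F) F) = tpk (nvf F - j) (rest j F) \<and> rest (nvf F - j) (rest j F) = rest (nvf F) F"
  using assms by (simp add: tpk_full rest_full nvf_rest)

lemma P3_app:
  assumes PX: "P3 X" and PY: "P3 Y"
  shows "P3 (X @ Y)"
  unfolding P3_def
proof (intro allI impI)
  fix j k assume jk: "j \<le> k" and kn: "k \<le> nvf (X @ Y)"
  let ?a = "nvf X"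
  show "tpk j (tpk k (X @ Y)) = tpk j (X @ Y) \<and> rest j (tpk k (X @ Y)) = tpk (k - j) (rest j (X @ Y)) \<and> rest (k - j) (rest j (X @ Y)) = rest k (X @ Y)"
  proof (cases "k \<le> ?a")
    case True
    have X: "tpk j (tpk k X) = tpk j X" "rest j (tpk k X) = tpk (k - j) (rest j X)" "rest (k - j) (rest j X) = rest k X"
      using PX jk True unfolding P3_def by blast+
    have nr: "nvf (rest j X) = ?a - j" using nvf_rest jk True by simp
    show ?thesis using jk True X nr
      by (simp add: tpk_app_le rest_app_le)
  next
    case False
    show ?thesis
    proof (cases "j \<le> ?a")
      case True
      have nr: "nvf (rest j X) = ?a - j" using nvf_rest True by simp
      have e: "k - j - (?a - j) = k - ?a" using True False by simp
      show ?thesis using True False nr e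
        by (simp add: tpk_app_le rest_app_le tpk_app_ge rest_app_ge)
    next
      case jF: False
      have Yall: "\<And>j' k'. j' \<le> k' \<Longrightarrow> k' \<le> nvf Y \<Longrightarrow> tpk j' (tpk k' Y) = tpk j' Y \<and> rest j' (tpk k' Y) = tpk (k' - j') (rest j' Y) \<and> rest (k' - j') (rest j' Y) = rest k' Y"
        using PY unfolding P3_def by blast
      have c1: "j - ?a \<le> k - ?a" using jk by simp
      have c2: "k - ?a \<le> nvf Y" using kn by simp
      note Y = Yall[OF c1 c2]
      have e: "k - ?a - (j - ?a) = k - j" using jF jk by simp
      show ?thesis using jF False Y e jk
        by (simp add: tpk_app_ge rest_app_ge)
    qed
  qed
qed

lemma P3_node:
  assumes PH: "P3 H"
  shows "P3 [Node H]"
  unfolding P3_def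
proof (intro allI impI)
  fix j k assume jk: "j \<le> k" and kn: "k \<le> nvf [Node H]"
  show "tpk j (tpk k [Node H]) = tpk j [Node H] \<and> rest j (tpk k [Node H]) = tpk (k - j) (rest j [Node H]) \<and> rest (k - j) (rest j [Node H]) = rest k [Node H]"
  proof (cases "k \<le> nvf H")
    case True
    have X: "tpk j (tpk k H) = tpk j H" "rest j (tpk k H) = tpk (k - j) (rest j H)" "rest (k - j) (rest j H) = rest k H"
      using PH jk True unfolding P3_def by blast+
    have nr: "nvf (rest j H) = nvf H - j" using nvf_rest jk True by simp
    show ?thesis using jk True X nr by (simp add: tpk_single_tree)
  next
    case False
    then have "k = nvf [Node H]" using kn by simp
    then show ?thesis using P3_full[of j "[Node H]"] jk by simp
  qed
qed

lemma P3_list: "(\<And>s. s \<in> set F \<Longrightarrow> P3 [s]) \<Longrightarrow> P3 F"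
proof (induction F)
  case Nil
  then show ?case by (simp add: P3_def)
next
  case (Cons a F)
  have "P3 [a]" "P3 F" using Cons by auto
  then show ?case using P3_app[of "[a]" F] by simp
qed

lemma P3_tree: "P3 [t]"
proof (induction t)
  case (Node ts)
  show ?case by (rule P3_node, rule P3_list) (use Node in auto)
qed

lemma triple:
  assumes "j \<le> k" "k \<le> nvf F"
  shows "tpk j (tpk k F) = tpk j F" "rest j (tpk k F) = tpk (k - j) (rest j F)" "rest (k - j) (rest j F) = rest k F"
proof -
  have "P3 F" by (rule P3_list) (rule P3_tree)
  then have "\<forall>j k. j \<le> k \<longrightarrow> k \<le> nvf F \<longrightarrow>
     tpk j (tpk k F) = tpk j F \<and> rest j (tpk k F) = tpk (k - j) (rest j F) \<and> rest (k - j) (rest j F) = rest k F"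
    unfolding P3_def .
  note H = this[rule_format, OF assms]
  show "tpk j (tpk k F) = tpk j F" using H by (rule conjunct1)
  show "rest j (tpk k F) = tpk (k - j) (rest j F)" using H by blast
  show "rest (k - j) (rest j F) = rest k F" using H by blast
qed

lemma tri:
  "(\<Sum>k\<in>{0..(n::nat)}. \<Sum>j\<in>{0..k}. A j k) = (\<Sum>j\<in>{0..n}. \<Sum>i\<in>{0..n-j}. A j (j+i) :: 'a::comm_monoid_add)"
proof (induction n)
  case 0
  then show ?case by simp
next
  case (Suc n)
  have "(\<Sum>j\<in>{0..Suc n}. \<Sum>i\<in>{0..Suc n-j}. A j (j+i))
      = (\<Sum>j\<in>{0..n}. \<Sum>i\<in>{0..Suc n-j}. A j (j+i)) + A (Suc n) (Suc n)"
    by simp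
  also have "(\<Sum>j\<in>{0..n}. \<Sum>i\<in>{0..Suc n-j}. A j (j+i)) = (\<Sum>j\<in>{0..n}. (\<Sum>i\<in>{0..n-j}. A j (j+i)) + A j (Suc n))"
  proof (rule sum.cong[OF refl])
    fix j assume "j \<in> {0..n}"
    then have "Suc n - j = Suc (n - j)" "j + Suc (n - j) = Suc n" by auto
    then show "(\<Sum>i\<in>{0..Suc n-j}. A j (j+i)) = (\<Sum>i\<in>{0..n-j}. A j (j+i)) + A j (Suc n)"
      by simp
  qed
  finally show ?case using Suc by (simp add: sum.distrib add.assoc)
qed

lemma conv_assoc: "conv (conv f g) h = conv f (conv g h)"
proof
  fix F
  let ?n = "nvf F"
  let ?A = "\<lambda>j k. hmul (hmul (f (tpk j F)) (g (tpk (k - j) (rest j F)))) (h (rest k F))"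
  have "conv (conv f g) h F = (\<Sum>k\<in>{0..?n}. \<Sum>j\<in>{0..k}. ?A j k)"
    unfolding conv_explicit[of _ _ F]
  proof (rule sum.cong[OF refl])
    fix k assume k: "k \<in> {0..?n}"
    then show "hmul (conv f g (tpk k F)) (h (rest k F)) = (\<Sum>j\<in>{0..k}. ?A j k)"
      by (simp add: conv_explicit nvf_top hmul_sum_left triple)
  qed
  also have "\<dots> = (\<Sum>j\<in>{0..?n}. \<Sum>i\<in>{0..?n-j}. ?A j (j+i))" by (rule tri)
  also have "\<dots> = conv f (conv g h) F"
    unfolding conv_explicit[of _ _ F]
  proof (rule sum.cong[OF refl])
    fix j assume j: "j \<in> {0..?n}"
    have "conv g h (rest j F) = (\<Sum>i\<in>{0..?n-j}. hmul (g (tpk i (rest j F))) (h (rest (j + i) F)))"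
      unfolding conv_explicit
    proof (rule sum.cong)
      show "{0..nvf (rest j F)} = {0..?n - j}" using j by (simp add: nvf_rest)
    next
      fix i assume "i \<in> {0..?n - j}"
      then have "rest i (rest j F) = rest (j + i) F" using j triple(3)[of j "j+i" F] by auto
      then show "hmul (g (tpk i (rest j F))) (h (rest i (rest j F))) = hmul (g (tpk i (rest j F))) (h (rest (j + i) F))" by simp
    qed
    then show "(\<Sum>i\<in>{0..?n-j}. ?A j (j+i)) = hmul (f (tpk j F)) (conv g h (rest j F))"
      by (simp add: hmul_sum_right hmul_assoc)
  qed
  finally show "conv (conv f g) h F = conv f (conv g h) F" .
qed

lemma sum_single_nat: "n \<in> A \<Longrightarrow> finite A \<Longrightarrow> (\<And>k. k \<in> A \<Longrightarrow> k \<noteq> n \<Longrightarrow> g k = 0) \<Longrightarrow> sum g A = g n"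
  by (simp add: sum.remove)

lemma conv_unit_right: "conv f unitE F = f F"
  unfolding conv_explicit
proof (subst sum_single_nat[of "nvf F"])
  fix k assume "k \<in> {0..nvf F}" "k \<noteq> nvf F"
  then have "nvf (rest k F) \<noteq> 0" using nvf_rest[of k F] by auto
  then have "rest k F \<noteq> []" by auto
  then show "hmul (f (tpk k F)) (unitE (rest k F)) = 0" by (simp add: unitE_def)
qed (auto simp: tpk_full rest_full unitE_def)

lemma conv_unit_left: "conv unitE f F = f F"
  unfolding conv_explicit
proof (subst sum_single_nat[of 0])
  fix k assume "k \<in> {0..nvf F}" "k \<noteq> 0"
  then have "nvf (tpk k F) \<noteq> 0" using nvf_top[of k F] by auto
  then have "tpk k F \<noteq> []" by auto
  then show "hmul (unitE (tpk k F)) (f (rest k F)) = 0" by (simp add: unitE_def)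
qed (auto simp: unitE_def)



function SL :: "forest \<Rightarrow> 'k::field H" where
  "SL F = (if F = [] then bas [] else - (\<Sum>k\<in>{0..<nvf F}. hmul (SL (tpk k F)) (bas (rest k F))))"
  by auto
termination by (relation "measure nvf") (auto simp: nvf_top)

function SR :: "forest \<Rightarrow> 'k::field H" where
  "SR F = (if F = [] then bas [] else - (\<Sum>k\<in>{1..nvf F}. hmul (bas (tpk k F)) (SR (rest k F))))"
  by auto
termination by (relation "measure nvf") (auto simp: nvf_rest)

declare SL.simps[simp del] SR.simps[simp del]

lemma sum_upto_last: "(\<Sum>k\<in>{0..n::nat}. g k) = (\<Sum>k\<in>{0..<n}. g k) + g n"
  by (simp add: atLeastLessThanSuc_atLeastAtMost[symmetric])

lemma SL_left: "conv SL idH = unitE"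
proof
  fix F
  show "conv SL idH F = unitE F"
  proof (cases "F = []")
    case True
    then show ?thesis by (simp add: conv_explicit idH_def unitE_def SL.simps)
  next
    case False
    have "conv SL idH F = (\<Sum>k\<in>{0..<nvf F}. hmul (SL (tpk k F)) (bas (rest k F))) + SL F"
      unfolding conv_explicit sum_upto_last by (simp add: idH_def tpk_full rest_full)
    also have "\<dots> = 0" using False by (subst (2) SL.simps) simp
    finally show ?thesis using False by (simp add: unitE_def)
  qed
qed

lemma SR_right: "conv idH SR = unitE"
proof
  fix F
  show "conv idH SR F = unitE F"
  proof (cases "F = []")
    case True
    then show ?thesis by (simp add: conv_explicit idH_def unitE_def SR.simps)
  next
    case False
    have "conv idH SR F = SR F + (\<Sum>k\<in>{1..nvf F}. hmul (bas (tpk k F)) (SR (rest k F)))"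
      unfolding conv_explicit by (simp add: idH_def sum.atLeast_Suc_atMost)
    also have "\<dots> = 0" using False by (subst (1) SR.simps) simp
    finally show ?thesis using False by (simp add: unitE_def)
  qed
qed

lemma SL_SR: "SL = SR"
proof -
  have "SL = conv SL unitE" by (rule ext) (simp add: conv_unit_right)
  also have "\<dots> = conv SL (conv idH SR)" by (simp add: SR_right)
  also have "\<dots> = conv (conv SL idH) SR" by (simp add: conv_assoc)
  also have "\<dots> = SR" by (rule ext) (simp add: SL_left conv_unit_left)
  finally show ?thesis .
qed

lemma antipode_SL: "antipode = SL"
  unfolding antipode_def
proof (rule the_equality)
  have "conv idH SL = unitE" unfolding SL_SR by (rule SR_right)
  then show "conv SL idH = unitE \<and> conv idH SL = unitE" using SL_left by simp
next
  fix S :: "'a endo" assume S: "conv S idH = unitE \<and> conv idH S = unitE"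
  have "S = conv S unitE" by (rule ext) (simp add: conv_unit_right)
  also have "\<dots> = conv S (conv idH SR)" by (simp add: SR_right)
  also have "\<dots> = conv (conv S idH) SR" by (simp add: conv_assoc)
  also have "\<dots> = SR" using S by (intro ext) (simp add: conv_unit_left)
  finally show "S = SL" by (simp add: SL_SR)
qed



lemma tpk_nonempty: "0 < k \<Longrightarrow> G \<noteq> [] \<Longrightarrow> tpk k G \<noteq> []"
proof -
  assume k: "0 < k" and G: "G \<noteq> []"
  have "nvf G > 0" using G by (metis gr0I nvf_eq_0)
  then have "nvf (tpk (min k (nvf G)) G) > 0" using k by (simp add: nvf_top)
  then show ?thesis
    by (cases "k \<le> nvf G") (auto simp: tpk_full min_def)
qed

lemma SL_vanish: "G \<noteq> [] \<Longrightarrow> (SL (t # G) :: 'k::field H) = 0"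
proof (induction "nvf (t # G)" arbitrary: t G rule: less_induct)
  case less
  let ?a = "nvt t" and ?n = "nvf (t # G)"
  have an: "?a < ?n" using less.prems by (simp, metis gr0I nvf_eq_0)
  have eq: "t # G = [t] @ G" by simp
  have A: "(\<Sum>k\<in>{0..<Suc ?a}. hmul (SL (tpk k (t # G))) (bas (rest k (t # G)))) = (0 :: 'k H)"
  proof -
    have "(\<Sum>k\<in>{0..<Suc ?a}. hmul (SL (tpk k (t # G))) (bas (rest k (t # G))) :: 'k H)
        = (\<Sum>k\<in>{0..nvf [t]}. hmul (hmul (SL (tpk k [t])) (bas (rest k [t]))) (bas G))"
    proof (rule sum.cong)
      show "{0..<Suc ?a} = {0..nvf [t]}" by auto
    next
      fix k assume "k \<in> {0..nvf [t]}"
      then have "k \<le> nvf [t]" by simp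
      then show "hmul (SL (tpk k (t # G))) (bas (rest k (t # G))) = (hmul (hmul (SL (tpk k [t])) (bas (rest k [t]))) (bas G) :: 'k H)"
        by (subst (1 2) eq, simp only: tpk_app_le rest_app_le hmul_assoc hmul_bas_bas)
    qed
    also have "\<dots> = hmul (conv SL idH [t]) (bas G)"
      by (simp add: conv_explicit hmul_sum_left idH_def)
    also have "\<dots> = 0" by (simp add: SL_left unitE_def)
    finally show ?thesis .
  qed
  have B: "(\<Sum>k\<in>{Suc ?a..<?n}. hmul (SL (tpk k (t # G))) (bas (rest k (t # G)))) = (0 :: 'k H)"
  proof (rule sum.neutral, rule ballI)
    fix k assume k: "k \<in> {Suc ?a..<?n}"
    then have "nvf [t] \<le> k" by simp
    then have tk: "tpk k (t # G) = t # tpk (k - ?a) G" by (subst eq, subst tpk_app_ge) auto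
    have ne: "tpk (k - ?a) G \<noteq> []" using k less.prems by (intro tpk_nonempty) auto
    have "nvf (t # tpk (k - ?a) G) < ?n"
      using k nvf_top[of k "t # G"] tk by simp
    then have "(SL (t # tpk (k - ?a) G) :: 'k H) = 0" using less.hyps[OF _ ne] by blast
    then show "hmul (SL (tpk k (t # G))) (bas (rest k (t # G))) = (0 :: 'k H)" by (simp add: tk)
  qed
  have "(\<Sum>k\<in>{0..<?n}. hmul (SL (tpk k (t # G))) (bas (rest k (t # G))) :: 'k H)
      = (\<Sum>k\<in>{0..<Suc ?a}. hmul (SL (tpk k (t # G))) (bas (rest k (t # G))))
        + (\<Sum>k\<in>{Suc ?a..<?n}. hmul (SL (tpk k (t # G))) (bas (rest k (t # G))))"
    using an by (intro sum.atLeastLessThan_concat[symmetric]) auto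
  note split_eq = this
  have S: "(SL (t # G) :: 'k H) = - (\<Sum>k\<in>{0..<?n}. hmul (SL (tpk k (t # G))) (bas (rest k (t # G))))"
    by (subst SL.simps) simp
  show ?case unfolding S split_eq A B by simp
qed

definition phi0 :: "forest \<Rightarrow> forest \<Rightarrow> 'k::field H" where
  "phi0 ts X = (if X = [] then 0 else bas (butlast X @ [Node (last X # ts)]))"

definition phi :: "forest \<Rightarrow> 'k::field H \<Rightarrow> 'k H" where
  "phi ts = lext (phi0 ts)"

lemma hmul_bas_right: "hmul x (bas Y) = lext (\<lambda>F. bas (F @ Y)) x"
  by (simp add: hmul_def)

lemma phi_hmul: "phi ts (hmul x (bas [u])) = hmul x (bas [Node (u # ts)])"
  by (simp add: phi_def hmul_bas_right lext_lext phi0_def)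

lemma SL_nil[simp]: "SL [] = bas []"
  by (subst SL.simps) simp

lemma SL_leaf: "SL [Node []] = - bas [Node []]"
  by (subst SL.simps) simp

lemma SL_node: "(SL [Node (t1 # ts)] :: 'k::field H) = phi ts (SL [t1]) - hmul (SL [t1]) (bas [Node ts])"
proof -
  obtain H where t1: "t1 = Node H" by (cases t1)
  let ?G = "t1 # ts"
  let ?F = "[Node ?G]"
  let ?a = "nvt t1"
  let ?g = "\<lambda>k. hmul (SL (tpk k ?F)) (bas (rest k ?F)) :: 'k H"
  have eqG: "?G = [t1] @ ts" by simp
  have a: "?a \<le> nvf ?G" by simp
  have "(SL ?F :: 'k H) = - (\<Sum>k\<in>{0..<Suc (nvf ?G)}. ?g k)"
    by (subst SL.simps) simp
  also have "(\<Sum>k\<in>{0..<Suc (nvf ?G)}. ?g k) = (\<Sum>k\<in>{0..<?a}. ?g k) + ?g ?a + (\<Sum>k\<in>{Suc ?a..<Suc (nvf ?G)}. ?g k)"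
  proof -
    have "(\<Sum>k\<in>{0..<Suc (nvf ?G)}. ?g k) = (\<Sum>k\<in>{0..<?a}. ?g k) + (\<Sum>k\<in>{?a..<Suc (nvf ?G)}. ?g k)"
      using a by (intro sum.atLeastLessThan_concat[symmetric]) auto
    also have "(\<Sum>k\<in>{?a..<Suc (nvf ?G)}. ?g k) = ?g ?a + (\<Sum>k\<in>{Suc ?a..<Suc (nvf ?G)}. ?g k)"
      using a by (intro sum.atLeast_Suc_lessThan) auto
    finally show ?thesis by (simp add: add.assoc)
  qed
  also have "(\<Sum>k\<in>{Suc ?a..<Suc (nvf ?G)}. ?g k) = 0"
  proof (rule sum.neutral, rule ballI)
    fix k assume k: "k \<in> {Suc ?a..<Suc (nvf ?G)}"
    then have "tpk k ?F = tpk k ?G" by (simp add: tpk_single_tree)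
    also have "\<dots> = t1 # tpk (k - ?a) ts" using k by (subst eqG, subst tpk_app_ge) auto
    finally have tk: "tpk k ?F = t1 # tpk (k - ?a) ts" .
    have "ts \<noteq> []" using k by auto
    then have "tpk (k - ?a) ts \<noteq> []" using k by (intro tpk_nonempty) auto
    then have "(SL (t1 # tpk (k - ?a) ts) :: 'k H) = 0" by (rule SL_vanish)
    then show "?g k = 0" by (simp add: tk)
  qed
  also have "?g ?a = hmul (SL [t1]) (bas [Node ts])"
  proof -
    have e1: "tpk ?a ?G = [t1]" using tpk_app_le[of ?a "[t1]" ts] tpk_full[of "[t1]" ?a] by simp
    have e2: "rest ?a ?G = ts" using rest_app_le[of ?a "[t1]" ts] rest_full[of "[t1]" ?a] by simp
    have "tpk ?a ?F = [t1]" "rest ?a ?F = [Node ts]"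
      using a e1 e2 by (simp_all add: tpk_single_tree)
    then show ?thesis by simp
  qed
  also have "(\<Sum>k\<in>{0..<?a}. ?g k) = phi ts (\<Sum>k\<in>{0..<?a}. hmul (SL (tpk k [t1])) (bas (rest k [t1])))"
    unfolding phi_def lext_sum
  proof (rule sum.cong[OF refl])
    fix k assume k: "k \<in> {0..<?a}"
    then have k': "k \<le> nvf H" using t1 by auto
    have e1: "tpk k ?G = tpk k [t1]" using tpk_app_le[of k "[t1]" ts] k by simp
    have e2: "rest k ?G = rest k [t1] @ ts" using rest_app_le[of k "[t1]" ts] k by simp
    have "tpk k ?F = tpk k [t1]" "rest k ?F = [Node (rest k [t1] @ ts)]"
      using k e1 e2 by (simp_all add: tpk_single_tree)
    moreover have "rest k [t1] = [Node (rest k H)]" using k' t1 by (simp add: tpk_single_tree)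
    ultimately show "?g k = (lext (phi0 ts) (hmul (SL (tpk k [t1])) (bas (rest k [t1]))) :: 'k H)"
      using phi_hmul[of ts "SL (tpk k [t1]) :: 'k H" "Node (rest k H)", unfolded phi_def] by simp
  qed
  also have "(\<Sum>k\<in>{0..<?a}. hmul (SL (tpk k [t1])) (bas (rest k [t1]))) = (- SL [t1] :: 'k H)"
    by (subst (2) SL.simps) simp
  finally show ?thesis by (simp add: phi_def lext_uminus)
qed



fun ld :: "ptree \<Rightarrow> nat" where
  "ld (Node []) = 0"
| "ld (Node (t # ts)) = Suc (ld t)"

definition Lp :: "ptree \<Rightarrow> nat list" where "Lp t = replicate (ld t) 0"

lemma Lp_simps[simp]: "Lp (Node []) = []" "Lp (Node (t # ts)) = 0 # Lp t"
  by (auto simp: Lp_def)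

lemma positions_Cons: "positions (Node (t # ts)) = insert [] ((#) 0 ` positions t \<union> (\<Union>i\<in>{1..<Suc (length ts)}. (#) i ` positions ((t # ts) ! i)))"
proof -
  have "{..<length (t # ts)} = insert 0 {1..<Suc (length ts)}" by auto
  then show ?thesis by simp
qed

lemma positions_leaf[simp]: "positions (Node []) = {[]}" by simp

lemma pos_child: "i < length ts \<Longrightarrow> p \<in> positions (ts ! i) \<Longrightarrow> i # p \<in> positions (Node ts)"
  by (subst positions.simps) blast

lemma pos_cases: "s \<in> positions (Node ts) \<Longrightarrow> s = [] \<or> (\<exists>i p. s = i # p \<and> i < length ts \<and> p \<in> positions (ts ! i))"
  by (subst (asm) positions.simps) blast

lemma Lp_in: "Lp t \<in> positions t"
proof (induction t rule: ld.induct)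
  case 1 then show ?case by simp
next
  case (2 t ts)
  then show ?case using pos_child[of 0 "t # ts" "Lp t"] by simp
qed

lemma geq_hl_Cons: "geq_hl (a # x) (a # y) \<longleftrightarrow> geq_hl x y"
proof -
  have L: "geq_left (a # x) (a # y) \<longleftrightarrow> geq_left x y"
  proof
    assume "geq_left (a # x) (a # y)"
    then obtain u i j p q where np: "\<not> prefix (a # x) (a # y)" "\<not> prefix (a # y) (a # x)"
      and e: "a # x = u @ i # p" "a # y = u @ j # q" "i < j" unfolding geq_left_def by blast
    show "geq_left x y"
    proof (cases u)
      case Nil then show ?thesis using e by auto
    next
      case (Cons b u')
      then show ?thesis using np e unfolding geq_left_def by auto
    qed
  next
    assume "geq_left x y"
    then obtain u i j p q where np: "\<not> prefix x y" "\<not> prefix y x"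
      and e: "x = u @ i # p" "y = u @ j # q" "i < j" unfolding geq_left_def by blast
    have h: "a # x = (a#u) @ i # p" "a # y = (a#u) @ j # q" using e by simp_all
    have ex: "\<exists>u i j p q. a # x = u @ i # p \<and> a # y = u @ j # q \<and> i < j"
      using h e(3) by blast
    show "geq_left (a # x) (a # y)" unfolding geq_left_def using np ex by simp
  qed
  show ?thesis unfolding geq_hl_def geq_high_def using L by simp
qed

lemma geq_hl_Nil: "geq_hl x []"
  by (simp add: geq_hl_def geq_high_def)

lemma split_uniq: "u @ i # p = u' @ i' # p' \<Longrightarrow> u @ j # q = u' @ j' # q' \<Longrightarrow> i \<noteq> j \<Longrightarrow> i' \<noteq> j' \<Longrightarrow> u = u'"
proof (induction u arbitrary: u')
  case Nil then show ?case by (cases u') auto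
next
  case (Cons c w) then show ?case by (cases u') auto
qed

lemma geq_hl_antisym: "geq_hl x y \<Longrightarrow> geq_hl y x \<Longrightarrow> x = y"
proof -
  assume a: "geq_hl x y" "geq_hl y x"
  show "x = y"
  proof (cases "geq_high x y")
    case True
    then show ?thesis using a unfolding geq_hl_def geq_high_def geq_left_def
      using prefix_order.antisym by blast
  next
    case False
    then have lxy: "geq_left x y" using a(1) unfolding geq_hl_def by blast
    then have nh: "\<not> geq_high y x" unfolding geq_left_def geq_high_def by blast
    then have lyx: "geq_left y x" using a(2) unfolding geq_hl_def by blast
    obtain u i j p q where e1: "x = u @ i # p" "y = u @ j # q" "i < j" using lxy unfolding geq_left_def by blast
    obtain u' i' j' p' q' where e2: "y = u' @ i' # p'" "x = u' @ j' # q'" "i' < j'" using lyx unfolding geq_left_def by blast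
    have x1: "u @ i # p = u' @ j' # q'" using e1(1) e2(2) by simp
    have y1: "u @ j # q = u' @ i' # p'" using e1(2) e2(1) by simp
    have "u = u'" using split_uniq[OF x1 y1] e1(3) e2(3) by simp
    then show ?thesis using e1 e2 by auto
  qed
qed

lemma Lp_greatest: "s \<in> positions t \<Longrightarrow> geq_hl (Lp t) s"
proof (induction t arbitrary: s rule: ld.induct)
  case 1
  then show ?case by (simp add: geq_hl_def geq_high_def)
next
  case (2 t ts)
  show ?case
  proof (cases s)
    case Nil then show ?thesis by (simp add: geq_hl_Nil)
  next
    case (Cons i p)
    then obtain i' where i': "i' < Suc (length ts)" "p \<in> positions ((t # ts) ! i')" "i = i'"
      using "2.prems" by auto
    show ?thesis
    proof (cases "i = 0")
      case True
      then show ?thesis using i' 2 Cons by (simp add: geq_hl_Cons)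
    next
      case False
      have "0 # Lp t = [] @ 0 # Lp t" "i # p = [] @ i # p" "0 < i" using False by auto
      then have ex: "\<exists>u ia j pa q. 0 # Lp t = u @ ia # pa \<and> i # p = u @ j # q \<and> ia < j" by blast
      have "geq_left (0 # Lp t) (i # p)" unfolding geq_left_def
        using False ex by simp
      then show ?thesis using Cons by (simp add: geq_hl_def)
    qed
  qed
qed

lemma greatest_vertex_Lp: "greatest_vertex t = Lp t"
  unfolding greatest_vertex_def
proof (rule the_equality)
  show "Lp t \<in> positions t \<and> (\<forall>s'\<in>positions t. geq_hl (Lp t) s')" using Lp_in Lp_greatest by blast
next
  fix s assume "s \<in> positions t \<and> (\<forall>s'\<in>positions t. geq_hl s s')"
  then show "s = Lp t" using Lp_in Lp_greatest geq_hl_antisym by blast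
qed

lemma left_edges_leaf: "left_edges (Node []) = {}"
  by (auto simp: left_edges_def greatest_vertex_Lp)

lemma left_edges_Cons: "left_edges (Node (t1 # ts)) = insert [0] ((#) 0 ` left_edges t1)"
proof -
  have "{v. v \<noteq> [] \<and> prefix v (0 # Lp t1)} = insert [0] ((#) 0 ` {v. v \<noteq> [] \<and> prefix v (Lp t1)})"
  proof (rule set_eqI)
    fix v show "v \<in> {v. v \<noteq> [] \<and> prefix v (0 # Lp t1)} \<longleftrightarrow> v \<in> insert [0] ((#) 0 ` {v. v \<noteq> [] \<and> prefix v (Lp t1)})" (is "?L \<longleftrightarrow> ?R")
    proof (cases v)
      case Nil then show ?thesis by auto
    next
      case (Cons a w)
      then show ?thesis by (cases w) (auto simp: image_iff)
    qed
  qed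
  then show ?thesis by (simp add: left_edges_def greatest_vertex_Lp)
qed

lemma left_edges_finite: "finite (left_edges t)"
  by (induction t rule: ld.induct) (auto simp: left_edges_leaf left_edges_Cons)

lemma left_edges_nonempty: "[] \<notin> left_edges t"
  by (simp add: left_edges_def)



definition Prp :: "nat list list \<Rightarrow> nat list set \<Rightarrow> bool" where
  "Prp rs X \<longleftrightarrow> distinct rs \<and> set rs = X \<and> sorted_wrt geq_hl rs"

lemma sorted_uniq:
  "sorted_wrt geq_hl xs \<Longrightarrow> sorted_wrt geq_hl ys \<Longrightarrow> distinct xs \<Longrightarrow> distinct ys \<Longrightarrow> set xs = set ys \<Longrightarrow> xs = ys"
proof (induction xs arbitrary: ys)
  case Nil then show ?case by simp
next
  case (Cons x xs)
  then obtain y ys' where ys: "ys = y # ys'" by (cases ys) auto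
  have xy: "x = y"
  proof (rule ccontr)
    assume ne: "x \<noteq> y"
    then have "x \<in> set ys'" "y \<in> set xs" using Cons.prems ys by (auto simp: set_eq_iff)
    then have "geq_hl y x" "geq_hl x y" using Cons.prems ys by auto
    then show False using ne geq_hl_antisym by blast
  qed
  have "set xs = set ys'" using Cons.prems ys xy by (auto simp: insert_ident)
  then show ?case using Cons ys xy by auto
qed

lemma cut_roots_eq: "Prp rs (insert [] c) \<Longrightarrow> cut_roots t c = rs"
  unfolding cut_roots_def Prp_def
  by (rule the_equality) (auto intro: sorted_uniq)

lemma Prp_step: "Prp zs X \<Longrightarrow> Prp (map ((#) 0) zs @ [[]]) (insert [] ((#) 0 ` X))"
  unfolding Prp_def
  by (auto simp: distinct_map sorted_wrt_append sorted_wrt_map geq_hl_Cons geq_hl_Nil)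

lemma ins_cancel: "insert a A = insert a B \<Longrightarrow> a \<notin> A \<Longrightarrow> a \<notin> B \<Longrightarrow> A = B"
  by (metis Diff_insert_absorb)

lemma Prp_butlast: "Prp (ys @ [[]]) (insert [] c1) \<Longrightarrow> [] \<notin> c1 \<Longrightarrow> Prp ys c1"
  unfolding Prp_def using ins_cancel[of "[]" "set ys" c1] by (auto simp: sorted_wrt_append)

lemma prune_cong:
  "(\<And>w. w \<noteq> [] \<Longrightarrow> P (p @ w) = Q (q @ w)) \<Longrightarrow> prune P p t = prune Q q t"
proof (induction t arbitrary: p q)
  case (Node ts)
  have f: "filter (\<lambda>(i, s). \<not> P (p @ [i])) (zip [0..<length ts] ts) = filter (\<lambda>(i, s). \<not> Q (q @ [i])) (zip [0..<length ts] ts)"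
    using Node.prems[of "[_]"] by (intro filter_cong) auto
  have m: "map (\<lambda>(i, s). prune P (p @ [i]) s) zs = map (\<lambda>(i, s). prune Q (q @ [i]) s) zs"
    if "set zs \<subseteq> set (zip [0..<length ts] ts)" for zs
  proof (rule map_cong[OF refl])
    fix x assume x: "x \<in> set zs"
    obtain i s where xis: "x = (i, s)" by (cases x)
    then have "s \<in> set ts" using x that by (auto dest: set_zip_rightD)
    moreover have "\<And>w. w \<noteq> [] \<Longrightarrow> P ((p @ [i]) @ w) = Q ((q @ [i]) @ w)" using Node.prems by simp
    ultimately show "(\<lambda>(i, s). prune P (p @ [i]) s) x = (\<lambda>(i, s). prune Q (q @ [i]) s) x"
      using Node.IH xis by auto
  qed
  show ?case by (simp only: prune.simps f) (rule arg_cong[where f = Node], rule m, auto)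
qed

lemma map_snd_zip_eq: "length xs = length ts \<Longrightarrow> map (\<lambda>(i, s). s) (zip xs ts) = ts"
proof (induction xs arbitrary: ts)
  case Nil then show ?case by simp
next
  case (Cons a xs) then show ?case by (cases ts) auto
qed

lemma prune_id: "(\<And>w. w \<noteq> [] \<Longrightarrow> \<not> P (p @ w)) \<Longrightarrow> prune P p t = t"
proof (induction t arbitrary: p)
  case (Node ts)
  have f: "filter (\<lambda>(i, s). \<not> P (p @ [i])) (zip [0..<length ts] ts) = zip [0..<length ts] ts"
    using Node.prems[of "[_]"] by (intro filter_True) auto
  have m: "map (\<lambda>(i, s). prune P (p @ [i]) s) (zip [0..<length ts] ts) = map (\<lambda>(i, s). s) (zip [0..<length ts] ts)"
  proof (rule map_cong[OF refl])
    fix x assume x: "x \<in> set (zip [0..<length ts] ts)"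
    obtain i s where xis: "x = (i, s)" by (cases x)
    then have "s \<in> set ts" using x by (auto dest: set_zip_rightD)
    moreover have "\<And>w. w \<noteq> [] \<Longrightarrow> \<not> P ((p @ [i]) @ w)" using Node.prems by simp
    ultimately show "(\<lambda>(i, s). prune P (p @ [i]) s) x = (\<lambda>(i, s). s) x"
      using Node.IH xis by auto
  qed
  show ?case by (simp only: prune.simps f m map_snd_zip_eq length_upt diff_zero)
qed

lemma prune_root:
  assumes c: "\<And>v. v \<in> c \<Longrightarrow> \<exists>w. v = 0 # w"
  shows "prune (\<lambda>w. w \<in> c) [] (Node (t1 # ts)) = Node ((if [0] \<in> c then [] else [prune (\<lambda>w. w \<in> c) [0] t1]) @ ts)"
proof -
  define zs where "zs = zip [1..<Suc (length ts)] ts"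
  have z: "zip [0..<Suc (length ts)] (t1 # ts) = (0, t1) # zs"
    unfolding zs_def by (simp del: upt_Suc add: upt_conv_Cons)
  have zi: "i \<ge> 1 \<and> s \<in> set ts" if "(i, s) \<in> set zs" for i s
  proof -
    have "i \<in> set [1..<Suc (length ts)]" using that unfolding zs_def by (rule set_zip_leftD)
    moreover have "s \<in> set ts" using that unfolding zs_def by (rule set_zip_rightD)
    ultimately show ?thesis by auto
  qed
  have f: "filter (\<lambda>(i, s). [i] \<notin> c) zs = zs"
  proof (rule filter_True, clarify)
    fix i s assume a: "(i, s) \<in> set zs" "[i] \<in> c"
    then show False using c[OF a(2)] zi[OF a(1)] by auto
  qed
  have m: "map (\<lambda>(i, s). prune (\<lambda>w. w \<in> c) [i] s) zs = ts"
  proof -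
    have "map (\<lambda>(i, s). prune (\<lambda>w. w \<in> c) [i] s) zs = map (\<lambda>(i, s). s) zs"
    proof (rule map_cong[OF refl])
      fix x assume x: "x \<in> set zs"
      obtain i s where xis: "x = (i, s)" by (cases x)
      then have "i \<ge> 1" using x zi by auto
      then have "prune (\<lambda>w. w \<in> c) ([i] @ []) s = s" using c by (intro prune_id) fastforce
      then show "(\<lambda>(i, s). prune (\<lambda>w. w \<in> c) [i] s) x = (\<lambda>(i, s). s) x" using xis by simp
    qed
    also have "\<dots> = ts" unfolding zs_def by (rule map_snd_zip_eq) (simp del: upt_Suc)
    finally show ?thesis .
  qed
  show ?thesis
    by (subst prune.simps) (simp del: upt_Suc add: z f m)
qed



lemma CR: "c \<subseteq> left_edges t \<Longrightarrow> \<exists>ys. Prp (ys @ [[]]) (insert [] c)"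
proof (induction t arbitrary: c rule: ld.induct)
  case 1
  then have "c = {}" by (simp add: left_edges_leaf)
  then show ?case by (intro exI[of _ "[]"]) (simp add: Prp_def)
next
  case (2 t1 ts)
  define c1 where "c1 = {w \<in> left_edges t1. 0 # w \<in> c}"
  have c1s: "c1 \<subseteq> left_edges t1" by (auto simp: c1_def)
  obtain ys1 where y1: "Prp (ys1 @ [[]]) (insert [] c1)" using 2 c1s by blast
  have ne: "[] \<notin> c1" using c1s left_edges_nonempty by blast
  have Pys: "Prp ys1 c1" using Prp_butlast[OF y1 ne] .
  have csub: "c \<subseteq> insert [0] ((#) 0 ` left_edges t1)" using "2.prems" by (simp add: left_edges_Cons)
  show ?case
  proof (cases "[0] \<in> c")
    case True
    have "c = insert [0] ((#) 0 ` c1)" using csub True by (auto simp: c1_def)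
    then have "insert [] c = insert [] ((#) 0 ` insert [] c1)" by auto
    then show ?thesis using Prp_step[OF y1] by (intro exI[of _ "map ((#) 0) (ys1 @ [[]])"]) simp
  next
    case False
    have "c = (#) 0 ` c1" using csub False by (auto simp: c1_def)
    then show ?thesis using Prp_step[OF Pys] by (intro exI[of _ "map ((#) 0) ys1"]) simp
  qed
qed

lemma cut_piece_child:
  assumes "\<And>w. w \<noteq> [] \<Longrightarrow> (0 # r @ w \<in> c) = (r @ w \<in> c1)"
  shows "cut_piece (Node (t1 # ts)) c (0 # r) = cut_piece t1 c1 r"
  unfolding cut_piece_def subtree.simps nth_Cons_0
  by (rule prune_cong) (use assms in simp)

lemma Wc_parts:
  assumes c1s: "c1 \<subseteq> left_edges t1"
  shows "Wc (Node (t1 # ts)) ((#) 0 ` c1) = butlast (Wc t1 c1) @ [Node (last (Wc t1 c1) # ts)]"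
    and "Wc (Node (t1 # ts)) (insert [0] ((#) 0 ` c1)) = Wc t1 c1 @ [Node ts]"
    and "Wc t1 c1 \<noteq> []"
proof -
  obtain ys1 where y1: "Prp (ys1 @ [[]]) (insert [] c1)" using CR[OF c1s] by blast
  have ne: "[] \<notin> c1" using c1s left_edges_nonempty by blast
  have Pys: "Prp ys1 c1" using Prp_butlast[OF y1 ne] .
  have W1: "Wc t1 c1 = map (cut_piece t1 c1) ys1 @ [cut_piece t1 c1 []]"
    unfolding Wc_def using cut_roots_eq[OF y1] by simp
  then show "Wc t1 c1 \<noteq> []" by simp
  let ?t = "Node (t1 # ts)"
  have pr1: "prune (\<lambda>w. w \<in> c) [0] t1 = cut_piece t1 c1 []"
    if "\<And>w. w \<noteq> [] \<Longrightarrow> (0 # w \<in> c) = (w \<in> c1)" for c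
    unfolding cut_piece_def subtree.simps
    by (rule prune_cong) (use that in simp)
  let ?ca = "(#) 0 ` c1"
  have ia: "\<And>r w. w \<noteq> [] \<Longrightarrow> (0 # r @ w \<in> ?ca) = (r @ w \<in> c1)" by auto
  have cra: "cut_roots ?t ?ca = map ((#) 0) ys1 @ [[]]"
    by (rule cut_roots_eq) (use Prp_step[OF Pys] in simp)
  have roota: "cut_piece ?t ?ca [] = Node (cut_piece t1 c1 [] # ts)"
  proof -
    have "[0] \<notin> ?ca" using ne by auto
    moreover have "prune (\<lambda>w. w \<in> ?ca) [0] t1 = cut_piece t1 c1 []"
      by (rule pr1) auto
    moreover have "prune (\<lambda>w. w \<in> ?ca) [] (Node (t1 # ts)) = Node ((if [0] \<in> ?ca then [] else [prune (\<lambda>w. w \<in> ?ca) [0] t1]) @ ts)"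
      by (rule prune_root) auto
    ultimately show ?thesis unfolding cut_piece_def subtree.simps by simp
  qed
  show "Wc ?t ?ca = butlast (Wc t1 c1) @ [Node (last (Wc t1 c1) # ts)]"
    unfolding Wc_def cra W1[unfolded Wc_def]
    using cut_piece_child[OF ia] roota by simp
  let ?cb = "insert [0] ((#) 0 ` c1)"
  have ib: "\<And>r w. w \<noteq> [] \<Longrightarrow> (0 # r @ w \<in> ?cb) = (r @ w \<in> c1)" by auto
  have crb: "cut_roots ?t ?cb = map ((#) 0) (ys1 @ [[]]) @ [[]]"
  proof (rule cut_roots_eq)
    have "insert [] ((#) 0 ` insert [] c1) = insert [] ?cb" by auto
    then show "Prp (map ((#) 0) (ys1 @ [[]]) @ [[]]) (insert [] ?cb)" using Prp_step[OF y1] by simp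
  qed
  have rootb: "cut_piece ?t ?cb [] = Node ts"
  proof -
    have "prune (\<lambda>w. w \<in> ?cb) [] (Node (t1 # ts)) = Node ((if [0] \<in> ?cb then [] else [prune (\<lambda>w. w \<in> ?cb) [0] t1]) @ ts)"
      by (rule prune_root) auto
    then show ?thesis unfolding cut_piece_def subtree.simps by simp
  qed
  show "Wc ?t ?cb = Wc t1 c1 @ [Node ts]"
    unfolding Wc_def crb W1[unfolded Wc_def]
    using cut_piece_child[OF ib] rootb by simp
qed

definition Fm :: "ptree \<Rightarrow> 'k::field H" where
  "Fm t = (\<Sum>c\<in>left_cuts t. Poly_Mapping.single (Wc t c) ((-1) ^ card c))"

lemma Fm_leaf: "Fm (Node []) = bas [Node []]"
proof -
  have "cut_roots (Node []) {} = [[]]" by (rule cut_roots_eq) (simp add: Prp_def)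
  then have "Wc (Node []) {} = [Node []]" by (simp add: Wc_def cut_piece_def)
  then show ?thesis by (simp add: Fm_def left_cuts_def left_edges_leaf bas_def)
qed

lemma sum_Pow_insert:
  assumes "finite A" "a \<notin> A"
  shows "(\<Sum>c\<in>Pow (insert a A). g c) = (\<Sum>c\<in>Pow A. g c) + (\<Sum>c\<in>Pow A. g (insert a c))"
proof -
  have "Pow (insert a A) = Pow A \<union> insert a ` Pow A" by (rule Pow_insert)
  moreover have "Pow A \<inter> insert a ` Pow A = {}" using assms(2) by auto
  moreover have "inj_on (insert a) (Pow A)" using assms(2) unfolding inj_on_def by (auto simp: insert_ident)
  ultimately show ?thesis using assms(1)
    by (simp add: sum.union_disjoint sum.reindex)
qed

lemma sum_Pow_image:
  assumes "inj f"
  shows "(\<Sum>c\<in>Pow (f ` A). g c) = (\<Sum>c\<in>Pow A. g (f ` c))"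
proof -
  have "Pow (f ` A) = (image f) ` Pow A" by (force simp: subset_image_iff)
  moreover have "inj_on (image f) (Pow A)" by (rule inj_onI) (simp add: inj_image_eq_iff[OF assms])
  ultimately show ?thesis by (simp add: sum.reindex)
qed

lemma Fm_node: "(Fm (Node (t1 # ts)) :: 'k::field H) = phi ts (Fm t1) - hmul (Fm t1) (bas [Node ts])"
proof -
  let ?E = "left_edges t1"
  let ?W = "\<lambda>c1. Wc t1 c1"
  let ?s = "\<lambda>c1. (-1) ^ card c1 :: 'k"
  have fin: "finite ?E" by (rule left_edges_finite)
  have nz: "[0] \<notin> (#) 0 ` ?E" using left_edges_nonempty by auto
  have "(Fm (Node (t1 # ts)) :: 'k H)
      = (\<Sum>c\<in>Pow ((#) 0 ` ?E). Poly_Mapping.single (Wc (Node (t1 # ts)) c) ((-1) ^ card c))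
        + (\<Sum>c\<in>Pow ((#) 0 ` ?E). Poly_Mapping.single (Wc (Node (t1 # ts)) (insert [0] c)) ((-1) ^ card (insert [0] c)))"
    unfolding Fm_def left_cuts_def left_edges_Cons
    by (rule sum_Pow_insert) (use fin nz in auto)
  also have "\<dots> = (\<Sum>c1\<in>Pow ?E. Poly_Mapping.single (butlast (?W c1) @ [Node (last (?W c1) # ts)]) (?s c1))
        + (\<Sum>c1\<in>Pow ?E. Poly_Mapping.single (?W c1 @ [Node ts]) (- ?s c1))"
  proof -
    have inj: "inj ((#) (0::nat))" by simp
    show ?thesis
      unfolding sum_Pow_image[OF inj]
    proof (rule arg_cong2[where f = "(+)"]; rule sum.cong[OF refl])
      fix c1 assume "c1 \<in> Pow ?E"
      then have c1: "c1 \<subseteq> ?E" by simp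
      have "card ((#) 0 ` c1) = card c1" by (rule card_image) (simp add: inj_on_def)
      then show "Poly_Mapping.single (Wc (Node (t1 # ts)) ((#) 0 ` c1)) ((-1) ^ card ((#) 0 ` c1))
          = Poly_Mapping.single (butlast (?W c1) @ [Node (last (?W c1) # ts)]) (?s c1)"
        by (simp add: Wc_parts(1)[OF c1])
    next
      fix c1 assume "c1 \<in> Pow ?E"
      then have c1: "c1 \<subseteq> ?E" by simp
      have fc: "finite c1" using c1 fin finite_subset by blast
      have "card ((#) 0 ` c1) = card c1" by (rule card_image) (simp add: inj_on_def)
      moreover have "[0] \<notin> (#) 0 ` c1" using c1 nz by auto
      ultimately have "card (insert [0] ((#) 0 ` c1)) = Suc (card c1)" using fc by simp
      then show "Poly_Mapping.single (Wc (Node (t1 # ts)) (insert [0] ((#) 0 ` c1))) ((-1) ^ card (insert [0] ((#) 0 ` c1)))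
          = Poly_Mapping.single (?W c1 @ [Node ts]) (- ?s c1)"
        by (simp add: Wc_parts(2)[OF c1])
    qed
  qed
  also have "\<dots> = phi ts (Fm t1) - hmul (Fm t1) (bas [Node ts])"
  proof -
    have A: "phi ts (Fm t1) = (\<Sum>c1\<in>Pow ?E. Poly_Mapping.single (butlast (?W c1) @ [Node (last (?W c1) # ts)]) (?s c1))"
      unfolding phi_def Fm_def left_cuts_def lext_sum
    proof (rule sum.cong[OF refl])
      fix c1 assume "c1 \<in> Pow ?E"
      then have "?W c1 \<noteq> []" using Wc_parts(3) by auto
      then show "lext (phi0 ts) (Poly_Mapping.single (?W c1) (?s c1)) = Poly_Mapping.single (butlast (?W c1) @ [Node (last (?W c1) # ts)]) (?s c1)"
        by (simp add: lext_single phi0_def bas_def)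
    qed
    have B: "hmul (Fm t1) (bas [Node ts]) = (\<Sum>c1\<in>Pow ?E. Poly_Mapping.single (?W c1 @ [Node ts]) (?s c1))"
      unfolding Fm_def left_cuts_def hmul_sum_left
      by (rule sum.cong[OF refl]) (simp only: hmul_bas_right, simp add: lext_single bas_def)
    show ?thesis unfolding A B by (simp add: single_uminus sum_negf)
  qed
  finally show ?thesis .
qed

lemma SL_Fm: "(SL [t] :: 'k::field H) = - Fm t"
proof (induction t rule: ld.induct)
  case 1
  then show ?case by (simp add: SL_leaf Fm_leaf)
next
  case (2 t1 ts)
  then show ?case by (simp add: SL_node Fm_node phi_def lext_uminus hmul_uminus_left)
qed

theorem proposition15:
  fixes t :: ptree
  shows "(antipode [t] :: 'k::field H) =
           - (\<Sum>c\<in>left_cuts t. Poly_Mapping.single (Wc t c) ((-1) ^ card c))"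
  using SL_Fm[of t] by (simp add: antipode_SL Fm_def)


end
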